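(* For every even integer $t \ge 4$, the sequence $\left(\left\lfloor n^t/24 \right\rfloor\right)_{n \ge 1}$ is eventually prime-free.
   Context: A sequence $(a_n)_{n\ge 1}$ of positive integers is called eventually prime-free if there exists an index $n_0$ such that $a_n$ is composite for all $n \ge n_0$. (Here, as in the paper, this is understood as: only finitely many terms $a_n$ are prime.) *)

theory Defs
  imports Main "HOL-Computational_Algebra.Primes"
begin

definition eventually_prime_free :: "(nat \<Rightarrow> nat) \<Rightarrow> bool" where
  "eventually_prime_free a \<longleftrightarrow> finite {n. n \<ge> 1 \<and> prime (a n)}"

end

theory Submission
  imports Defs
begin

lemma np_mult: assumes "(a::nat) \<ge> 2" "b \<ge> 2" shows "\<not> prime (a * b)"
proof
  assume "prime (a * b)"
  then have "a = 1 \<or> b = 1" by (rule prime_product)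
  then show False using assms by auto
qed

lemma L3: assumes "\<not> 3 dvd (n::nat)" shows "n^2 mod 3 = 1"
proof -
  have "n mod 3 = 1 \<or> n mod 3 = 2" using assms by presburger
  moreover have "n^2 mod 3 = (n mod 3)^2 mod 3" by (simp add: power_mod)
  ultimately show ?thesis by (auto simp: power2_eq_square)
qed
lemma L8: assumes "odd (n::nat)" shows "n^2 mod 8 = 1"
proof -
  have "n mod 8 = 1 \<or> n mod 8 = 3 \<or> n mod 8 = 5 \<or> n mod 8 = 7" using assms by presburger
  moreover have "n^2 mod 8 = (n mod 8)^2 mod 8" by (simp add: power_mod)
  ultimately show ?thesis by (auto simp: power2_eq_square)
qed
lemma d24: assumes "(z::nat) mod 8 = 0" "z mod 3 = 0" shows "24 dvd z"
proof -
  obtain k where k: "z = 8*k" using assms(1) by auto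
  then have "(8*k) mod 3 = 0" using assms(2) by simp
  then have "3 dvd 8*k" by auto
  then have "3 dvd k" by (simp add: prime_dvd_mult_iff)
  then show ?thesis using k by auto
qed
lemma sq_mod_pow: "((x::nat) mod q = 1) \<Longrightarrow> x^s mod q = 1 mod q"
  by (metis power_mod power_one)

lemma div_split: assumes "(d::nat) > 0" "d dvd x * y" shows "d div gcd d x dvd y"
proof -
  define g where "g = gcd d x"
  have g0: "g > 0" using assms g_def by simp
  obtain d' where d': "d = g * d'" using g_def by (metis gcd_dvd1 dvdE)
  obtain x' where x': "x = g * x'" using g_def by (metis gcd_dvd2 dvdE)
  have cop: "coprime d' x'" using g0 d' x' g_def
    by (metis div_gcd_coprime gcd_eq_0_iff nonzero_mult_div_cancel_left not_gr_zero assms(1))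
  have "g * d' dvd g * (x' * y)" using assms d' x' by (simp add: mult.assoc)
  then have "d' dvd x' * y" using g0 by simp
  then have "d' dvd y" using cop by (simp add: coprime_dvd_mult_right_iff)
  moreover have "d div g = d'" using d' g0 by simp
  ultimately show ?thesis using g_def by simp
qed

lemma h48: assumes "(y::nat) mod 48 < 24" shows "y div 24 = 2*(y div 48)"
proof -
  have "y mod 48 = y mod 24 + 24 * (y div 24 mod 2)" using mod_mult2_eq[of y 24 2] by simp
  then have a: "y div 24 mod 2 = 0" using assms by linarith
  have "y div 48 = y div 24 div 2" using div_mult2_eq[of y 24 2] by simp
  then show ?thesis using a div_mult_mod_eq[of "y div 24" 2] by linarith
qed
lemma h72: assumes "(y::nat) mod 72 < 24" shows "y div 24 = 3*(y div 72)"
proof -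
  have "y mod 72 = y mod 24 + 24 * (y div 24 mod 3)" using mod_mult2_eq[of y 24 3] by simp
  then have a: "y div 24 mod 3 = 0" using assms by linarith
  have "y div 72 = y div 24 div 3" using div_mult2_eq[of y 24 3] by simp
  then show ?thesis using a div_mult_mod_eq[of "y div 24" 3] by linarith
qed
lemma r48: assumes "(r::nat) < 48" "16 dvd r" "r mod 3 \<noteq> 2" shows "r < 24"
proof -
  obtain k where k: "r = 16*k" using assms(2) by blast
  then have "k < 3" using assms(1) by simp
  then have "k = 0 \<or> k = 1 \<or> k = 2" by auto
  then show ?thesis using k assms(3) by auto
qed
lemma r72: assumes "(r::nat) < 72" "9 dvd r" "r mod 8 = 1" shows "r < 24"
proof -
  obtain k where k: "r = 9*k" using assms(2) by blast
  then have "k < 8" using assms(1) by simp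
  then have "k \<in> {0,1,2,3,4,5,6,7}" by auto
  then show ?thesis using k assms(3) by auto
qed
lemma main:
  fixes n s :: nat
  assumes s2: "s \<ge> 2" and n7: "n \<ge> 7"
  shows "\<not> prime (n ^ (2*s) div 24)"
proof -
  define x where "x = n^2"
  define y where "y = x^s"
  have yx: "n ^ (2*s) = y" unfolding y_def x_def by (simp add: power_mult)
  have x49: "x \<ge> 49"
  proof -
    have "7*7 \<le> n*n" using n7 mult_le_mono by blast
    then show "x \<ge> 49" unfolding x_def by (simp add: power2_eq_square)
  qed
  have "x^2 \<le> y" unfolding y_def using s2 x49 by (intro power_increasing) auto
  moreover have "x^2 \<ge> 49*49" using mult_le_mono[OF x49 x49] by (simp add: power2_eq_square)
  ultimately have y_big: "y \<ge> 2401" by simp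
  consider (ev) "even n" | (nine) "odd n" "3 dvd n" | (one) "odd n" "\<not> 3 dvd n" by blast
  then show ?thesis
  proof cases
    case ev
    then obtain j where j: "n = 2*j" by blast
    have "x = 4*(j*j)" unfolding x_def j by (simp add: power2_eq_square)
    then obtain k where k: "x = 4 * k" by blast
    have "y = 4^s * k^s" unfolding y_def k by (simp add: power_mult_distrib)
    moreover have "(16::nat) dvd 4^s"
    proof -
      obtain r where "s = r + 2" using s2 by (metis le_add_diff_inverse2)
      then show ?thesis by (simp add: power_add)
    qed
    ultimately have d16: "16 dvd y" by simp
    have "x mod 3 \<in> {0,1}"
    proof (cases "3 dvd n")
      case True
      then have "3 dvd x" unfolding x_def by (simp add: power2_eq_square)
      then show ?thesis by simp
    next
      case False
      then show ?thesis unfolding x_def using L3 by simp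
    qed
    moreover have "y mod 3 = (x mod 3)^s mod 3" unfolding y_def by (simp add: power_mod)
    ultimately have y3: "y mod 3 \<in> {0,1}" using s2 by (auto simp: power_0_left)
    have "y mod 48 < 24"
    proof (rule r48)
      show "y mod 48 < 48" by simp
      show "16 dvd y mod 48" using d16 by (simp add: dvd_mod_iff)
      show "y mod 48 mod 3 \<noteq> 2" using y3 by (auto simp: mod_mod_cancel)
    qed
    then have "y div 24 = 2 * (y div 48)" by (rule h48)
    moreover have "y div 48 \<ge> 2" using y_big by simp
    ultimately show ?thesis using yx np_mult[of 2 "y div 48"] by simp
  next
    case nine
    then obtain k where "n = 3*k" by blast
    then have "x = 9*(k*k)" unfolding x_def by (simp add: power2_eq_square)
    then have "9 dvd x" by simp
    then have d9: "9 dvd y" unfolding y_def using s2 dvd_power_le[of 9 x 1 s] by simp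
    have "x mod 8 = 1" unfolding x_def using L8 nine(1) by simp
    then have y8: "y mod 8 = 1" unfolding y_def using sq_mod_pow by simp
    have "y mod 72 < 24"
    proof (rule r72)
      show "y mod 72 < 72" by simp
      show "9 dvd y mod 72" using d9 by (simp add: dvd_mod_iff)
      show "y mod 72 mod 8 = 1" using y8 by (simp add: mod_mod_cancel)
    qed
    then have "y div 24 = 3 * (y div 72)" by (rule h72)
    moreover have "y div 72 \<ge> 2" using y_big by simp
    ultimately show ?thesis using yx np_mult[of 3 "y div 72"] by simp
  next
    case one
    have "x mod 8 = 1" unfolding x_def using L8 one(1) by simp
    then have y8: "y mod 8 = 1" unfolding y_def using sq_mod_pow by simp
    have "x mod 3 = 1" unfolding x_def using L3 one(2) by simp
    then have y3: "y mod 3 = 1" unfolding y_def using sq_mod_pow by simp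
    define m where "m = n^s"
    have ym: "y = m^2"
    proof -
      have e1: "m^2 = n^(s*2)" unfolding m_def by (rule power_mult[symmetric])
      have e2: "n^(s*2) = n^(2*s)" by (simp only: mult.commute[of s 2])
      show ?thesis using trans[OF trans[OF e1 e2] yx] by (rule sym)
    qed
    have m49: "m \<ge> 49"
    proof (rule ccontr)
      assume "\<not> m \<ge> 49"
      then have "m \<le> 48" by simp
      then have "m*m \<le> 48*48" using mult_le_mono by blast
      then have "m*m \<le> 2304" by simp
      moreover have "y = m*m" using ym by (simp only: power2_eq_square)
      ultimately have "y \<le> 2304" by (simp only:)
      then show False using y_big by simp
    qed
    have yfac: "y = (m-1)*(m+1) + 1"
    proof -
      obtain p where p: "m = Suc p" using m49 by (cases m) auto
      have "(Suc p)^2 = p*(p+2) + 1" by (simp add: power2_eq_square algebra_simps)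
      moreover have "Suc p - 1 = p" "Suc p + 1 = p + 2" by simp_all
      ultimately show ?thesis unfolding ym p by simp
    qed
    have d24: "24 dvd (m-1)*(m+1)"
    proof -
      define z where "z = (m-1)*(m+1)"
      have zy: "y = z + 1" using yfac unfolding z_def .
      have "z mod 8 = 0" using y8 unfolding zy by presburger
      moreover have "z mod 3 = 0" using y3 unfolding zy by presburger
      ultimately have "24 dvd z" by (rule d24)
      then show ?thesis using z_def by simp
    qed
    define a where "a = gcd 24 (m-1)"
    define b where "b = 24 div a"
    have a_dvd: "a dvd m-1" "a dvd 24" unfolding a_def by auto
    have b_dvd: "b dvd m+1" unfolding b_def a_def using div_split[OF _ d24] by simp
    have a0: "a > 0" "a \<le> 24" unfolding a_def by (auto intro: dvd_imp_le)
    have ab: "a * b = 24" unfolding b_def using a_dvd(2) by simp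
    then have bd: "b dvd 24" by (metis dvd_triv_right)
    have "b \<noteq> 0" using ab by (metis mult_0_right zero_neq_numeral)
    then have b0: "b > 0" "b \<le> 24" using bd by (auto intro: dvd_imp_le)
    have e1: "a * ((m-1) div a) = m-1" using a_dvd(1) by (rule dvd_mult_div_cancel)
    have e2: "b * ((m+1) div b) = m+1" using b_dvd by (rule dvd_mult_div_cancel)
    have "(m-1)*(m+1) = (a * ((m-1) div a)) * (b * ((m+1) div b))"
      unfolding e1 e2 ..
    also have "\<dots> = (a * b) * (((m-1) div a) * ((m+1) div b))" by (simp only: mult_ac)
    also have "\<dots> = 24 * (((m-1) div a) * ((m+1) div b))" unfolding ab ..
    finally have e3: "(m-1)*(m+1) = 24 * (((m-1) div a) * ((m+1) div b))" .
    have "y div 24 = ((m-1)*(m+1)) div 24"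
    proof -
      obtain k where k: "(m-1)*(m+1) = 24*k" using d24 by blast
      show ?thesis using yfac unfolding k by simp
    qed
    also have "\<dots> = ((m-1) div a) * ((m+1) div b)" unfolding e3 by simp
    finally have "y div 24 = ((m-1) div a) * ((m+1) div b)" .
    moreover have "(m-1) div a \<ge> 2"
    proof -
      have "(m-1) div a \<ge> (m-1) div 24" using a0 by (simp add: div_le_mono2)
      moreover have "(m-1) div 24 \<ge> 2" using m49 by simp
      ultimately show ?thesis by simp
    qed
    moreover have "(m+1) div b \<ge> 2"
    proof -
      have "(m+1) div b \<ge> (m+1) div 24" using b0 by (simp add: div_le_mono2)
      moreover have "(m+1) div 24 \<ge> 2" using m49 by simp
      ultimately show ?thesis by simp
    qed
    ultimately have "\<not> prime (y div 24)" using np_mult by metis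
    then show ?thesis using yx by simp
  qed
qed

theorem theorem6:
  fixes t :: nat
  assumes "even t" and "t \<ge> 4"
  shows "eventually_prime_free (\<lambda>n. n ^ t div 24)"
proof -
  obtain s where s: "t = 2*s" using assms(1) by blast
  have s2: "s \<ge> 2" using s assms(2) by simp
  have "{n. n \<ge> 1 \<and> prime (n ^ t div 24)} \<subseteq> {..6::nat}"
  proof
    fix n :: nat assume "n \<in> {n. n \<ge> 1 \<and> prime (n ^ t div 24)}"
    then have "prime (n ^ (2*s) div 24)" using s by simp
    then have "\<not> n \<ge> 7" using main[OF s2] by blast
    then show "n \<in> {..6::nat}" by simp
  qed
  then show ?thesis unfolding eventually_prime_free_def by (rule finite_subset) simp
qed
end
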